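(* Let $G$ be a finite group and $H$ a normal subgroup of $G$ with $|H|$ odd. Then $\Gamma_{G,H}$ admits a perfect code.
   Context: For a normal subgroup $H$ of a finite group $G$ with identity $e$, the subgroup sum graph $\Gamma_{G,H}$ is the simple undirected graph with vertex set $G$ in which distinct vertices $x,y$ are adjacent if and only if $xy\in H\setminus\{e\}$. A perfect code in a graph is a set $C$ of vertices that is independent and such that every vertex not in $C$ is adjacent to exactly one vertex of $C$. *)

theory Defs
  imports "HOL-Algebra.Algebra"
begin

definition subgroup_sum_adj :: "('a, 'b) monoid_scheme \<Rightarrow> 'a set \<Rightarrow> 'a \<Rightarrow> 'a \<Rightarrow> bool" where
  "subgroup_sum_adj G H x y \<longleftrightarrow>
     x \<in> carrier G \<and> y \<in> carrier G \<and> x \<noteq> y \<and> x \<otimes>\<^bsub>G\<^esub> y \<in> H - {\<one>\<^bsub>G\<^esub>}"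

definition perfect_code :: "'a set \<Rightarrow> ('a \<Rightarrow> 'a \<Rightarrow> bool) \<Rightarrow> 'a set \<Rightarrow> bool" where
  "perfect_code V E C \<longleftrightarrow>
     C \<subseteq> V \<and>
     (\<forall>x\<in>C. \<forall>y\<in>C. \<not> E x y) \<and>
     (\<forall>v\<in>V - C. \<exists>!c. c \<in> C \<and> E v c)"

end

theory Submission
  imports Defs
begin

lemma invol_even:
  assumes "finite A" "\<forall>z\<in>A. f z \<in> A \<and> f z \<noteq> z \<and> f (f z) = z"
  shows "even (card A)"
  using assms
proof (induction "card A" arbitrary: A rule: less_induct)
  case less
  show ?case
  proof (cases "A = {}")
    case True then show ?thesis by simp
  next
    case False
    then obtain z where z: "z \<in> A" by blast
    let ?B = "A - {z, f z}"
    have fz: "f z \<in> A" "f z \<noteq> z" using less.prems z by auto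
    have cB: "card ?B = card A - 2" using fz z less.prems(1)
      by (simp add: card_Diff_subset)
    have cA: "card A \<ge> 2" using fz z less.prems(1)
      by (metis card_2_iff card_mono empty_subsetI insert_subset)
    have "even (card ?B)"
    proof (rule less.hyps)
      show "card ?B < card A" using cB cA by simp
      show "finite ?B" using less.prems(1) by simp
      show "\<forall>w\<in>?B. f w \<in> ?B \<and> f w \<noteq> w \<and> f (f w) = w"
        using less.prems(2) z by (metis Diff_iff insertCI insertE singletonD)
    qed
    then show ?thesis using cB cA by (metis add_diff_inverse_nat even_add even_numeral not_less)
  qed
qed

context normal
begin

lemma comm_mem: "a \<in> carrier G \<Longrightarrow> b \<in> carrier G \<Longrightarrow> a \<otimes> b \<in> H \<Longrightarrow> b \<otimes> a \<in> H"
proof -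
  assume a: "a \<in> carrier G" and b: "b \<in> carrier G" and ab: "a \<otimes> b \<in> H"
  have "inv a \<otimes> (a \<otimes> b) \<otimes> a \<in> H" using inv_op_closed1[OF a ab] .
  moreover have "inv a \<otimes> (a \<otimes> b) \<otimes> a = b \<otimes> a"
    using a b by (simp add: m_assoc[symmetric])
  ultimately show ?thesis by simp
qed

lemma Hm: "x \<in> H \<Longrightarrow> y \<in> H \<Longrightarrow> x \<otimes> y \<in> H"
  using subgroup.m_closed[OF subgroup_axioms] by blast

definition rel where "rel a b \<longleftrightarrow> a \<otimes> inv b \<in> H \<or> a \<otimes> b \<in> H"
definition SS where "SS a = {z \<in> carrier G. rel z a}"
definition PP where "PP z \<longleftrightarrow> (z \<otimes> z \<in> H \<longrightarrow> z \<otimes> z = \<one>)"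
definition pick where "pick A = (SOME z. z \<in> A \<and> PP z)"

lemma prod_eq: "x \<in> carrier G \<Longrightarrow> y \<in> carrier G \<Longrightarrow> z \<in> carrier G \<Longrightarrow>
   (x \<otimes> y) \<otimes> (inv y \<otimes> z) = x \<otimes> z"
  by (simp add: m_assoc[symmetric]) (metis m_assoc r_inv r_one inv_closed)

lemma rel_sym: "a \<in> carrier G \<Longrightarrow> b \<in> carrier G \<Longrightarrow> rel a b \<Longrightarrow> rel b a"
  unfolding rel_def
  by (metis comm_mem inv_closed inv_mult_group inv_inv m_inv_closed)

lemma rel_trans: assumes z: "z \<in> carrier G" and a: "a \<in> carrier G" and b: "b \<in> carrier G"
  and za: "rel z a" and ab: "rel a b" shows "rel z b"
proof -
  have ia: "inv a \<in> carrier G" and ib: "inv b \<in> carrier G" using a b by auto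
  { assume h1: "z \<otimes> inv a \<in> H" and h2: "a \<otimes> inv b \<in> H"
    have "z \<otimes> inv b \<in> H" using Hm[OF h1 h2] prod_eq[OF z ia ib] a by simp }
  moreover
  { assume h1: "z \<otimes> inv a \<in> H" and h2: "a \<otimes> b \<in> H"
    have "z \<otimes> b \<in> H" using Hm[OF h1 h2] prod_eq[OF z ia b] a by simp }
  moreover
  { assume h1: "z \<otimes> a \<in> H" and h2: "a \<otimes> inv b \<in> H"
    have "inv (a \<otimes> inv b) \<in> H" using h2 by simp
    hence "b \<otimes> inv a \<in> H" using a b by (simp add: inv_mult_group)
    hence h3: "inv a \<otimes> b \<in> H" using comm_mem ia b by blast
    have "z \<otimes> b \<in> H" using Hm[OF h1 h3] prod_eq[OF z a b] by simp }
  moreover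
  { assume h1: "z \<otimes> a \<in> H" and h2: "a \<otimes> b \<in> H"
    have "inv (a \<otimes> b) \<in> H" using h2 by simp
    hence "inv b \<otimes> inv a \<in> H" using a b by (simp add: inv_mult_group)
    hence h3: "inv a \<otimes> inv b \<in> H" using comm_mem ia ib by blast
    have "z \<otimes> inv b \<in> H" using Hm[OF h1 h3] prod_eq[OF z a ib] by simp }
  ultimately show ?thesis using za ab unfolding rel_def by blast
qed

lemma SS_eq: "a \<in> carrier G \<Longrightarrow> b \<in> carrier G \<Longrightarrow> rel a b \<Longrightarrow> SS a = SS b"
  unfolding SS_def using rel_trans rel_sym by blast

lemma rel_refl: "a \<in> carrier G \<Longrightarrow> rel a a"
  unfolding rel_def by simp

lemma rel_inv: "a \<in> carrier G \<Longrightarrow> rel (inv a) a"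
  unfolding rel_def by simp

lemma exists_good:
  assumes fin: "finite (carrier G)" and odd: "odd (card H)" and a: "a \<in> carrier G"
  shows "\<exists>z. z \<in> SS a \<and> PP z"
proof (cases "a \<otimes> a \<in> H")
  case False
  then show ?thesis using a rel_refl unfolding SS_def PP_def by auto
next
  case True
  define T where "T = {z \<in> carrier G. z \<otimes> inv a \<in> H}"
  have "bij_betw (\<lambda>h. h \<otimes> a) H T"
  proof (rule bij_betw_byWitness[where f' = "\<lambda>z. z \<otimes> inv a"])
    show "\<forall>h\<in>H. h \<otimes> a \<otimes> inv a = h" using a by (simp add: m_assoc)
    show "\<forall>z\<in>T. z \<otimes> inv a \<otimes> a = z" using a unfolding T_def by (simp add: m_assoc)
    show "(\<lambda>h. h \<otimes> a) ` H \<subseteq> T" using a unfolding T_def by (auto simp: m_assoc)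
    show "(\<lambda>z. z \<otimes> inv a) ` T \<subseteq> H" unfolding T_def by auto
  qed
  hence cT: "card T = card H" by (simp add: bij_betw_same_card)
  have finT: "finite T" using fin unfolding T_def by simp
  have invT: "inv z \<in> T" if z: "z \<in> T" for z
  proof -
    have zc: "z \<in> carrier G" and zi: "z \<otimes> inv a \<in> H" using z unfolding T_def by auto
    have "inv a \<otimes> z \<in> H" using comm_mem[OF zc _ zi] a by simp
    hence "(a \<otimes> a) \<otimes> (inv a \<otimes> z) \<in> H" using True by simp
    hence "a \<otimes> z \<in> H" using prod_eq[OF a a zc] by simp
    hence "inv (a \<otimes> z) \<in> H" by simp
    hence "inv z \<otimes> inv a \<in> H" using a zc by (simp add: inv_mult_group)
    thus ?thesis using zc unfolding T_def by simp
  qed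
  have "\<exists>z\<in>T. inv z = z"
  proof (rule ccontr)
    assume "\<not> ?thesis"
    hence "\<forall>z\<in>T. inv z \<in> T \<and> inv z \<noteq> z \<and> inv (inv z) = z"
      using invT unfolding T_def by auto
    hence "even (card T)" using invol_even[OF finT] by blast
    thus False using cT odd by simp
  qed
  then obtain z where zT: "z \<in> T" and zz: "inv z = z" by blast
  have zc: "z \<in> carrier G" using zT unfolding T_def by simp
  have "z \<otimes> z = \<one>" using zz zc by (metis r_inv)
  moreover have "z \<in> SS a" using zT unfolding T_def SS_def rel_def by simp
  ultimately show ?thesis unfolding PP_def by blast
qed

lemma main_pc:
  assumes fin: "finite (carrier G)" and odd: "odd (card H)"
  shows "\<exists>C. perfect_code (carrier G) (subgroup_sum_adj G H) C"
proof -
  define u where "u a = pick (SS a)" for a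
  have uS: "u a \<in> SS a" "PP (u a)" if "a \<in> carrier G" for a
    using someI_ex[OF exists_good[OF fin odd that]] unfolding u_def pick_def by auto
  have uc: "u a \<in> carrier G" if "a \<in> carrier G" for a using uS[OF that] unfolding SS_def by simp
  have uSS: "SS (u a) = SS a" if "a \<in> carrier G" for a
    using uS[OF that] that SS_eq unfolding SS_def by auto
  define C where "C = {y. \<exists>a\<in>carrier G. y = u a \<or> y = inv (u a)}"
  have key: "c = u v \<or> c = inv (u v)" if c: "c \<in> C" and v: "v \<in> carrier G" and r: "rel c v" for c v
  proof -
    obtain a where a: "a \<in> carrier G" and ca: "c = u a \<or> c = inv (u a)" using c unfolding C_def by blast
    have cc: "c \<in> carrier G" using ca uc[OF a] by auto
    have "rel c (u a)" using ca uc[OF a] rel_refl rel_inv by auto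
    hence "SS c = SS (u a)" using SS_eq cc uc[OF a] by blast
    also have "\<dots> = SS a" using uSS[OF a] .
    finally have "SS a = SS v" using SS_eq[OF cc v r] by simp
    hence "u a = u v" unfolding u_def by simp
    thus ?thesis using ca by simp
  qed
  have Csub: "C \<subseteq> carrier G" unfolding C_def using uc by auto
  have indep: "\<not> subgroup_sum_adj G H x y" if x: "x \<in> C" and y: "y \<in> C" for x y
  proof
    assume adj: "subgroup_sum_adj G H x y"
    have xc: "x \<in> carrier G" and yc: "y \<in> carrier G" using x y Csub by auto
    have xy: "x \<otimes> y \<in> H" "x \<otimes> y \<noteq> \<one>" "x \<noteq> y" using adj unfolding subgroup_sum_adj_def by auto
    have "rel x y" using xy unfolding rel_def by simp
    hence k1: "x = u y \<or> x = inv (u y)" using key x yc by blast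
    have k2: "y = u y \<or> y = inv (u y)" using key[OF y yc rel_refl[OF yc]] .
    show False
    proof -
      have uyc: "u y \<in> carrier G" using uc[OF yc] .
      have "x \<otimes> y = \<one>" using k1 k2 xy(3) uyc
        by (metis l_inv r_inv)
      thus False using xy(2) by simp
    qed
  qed
  have cover: "\<exists>!c. c \<in> C \<and> subgroup_sum_adj G H v c" if v: "v \<in> carrier G - C" for v
  proof -
    have vc: "v \<in> carrier G" and vC: "v \<notin> C" using v by auto
    have uvC: "u v \<in> C" "inv (u v) \<in> C" unfolding C_def using vc by auto
    have uvc: "u v \<in> carrier G" using uc[OF vc] .
    have r: "rel (u v) v" using uS(1)[OF vc] unfolding SS_def by simp
    have ne1: "u v \<noteq> v" "inv (u v) \<noteq> v" using uvC vC by auto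
    have ex: "\<exists>c. c \<in> C \<and> subgroup_sum_adj G H v c"
    proof (cases "u v \<otimes> inv v \<in> H")
      case True
      hence "inv (u v \<otimes> inv v) \<in> H" by simp
      hence "v \<otimes> inv (u v) \<in> H" using vc uvc by (simp add: inv_mult_group)
      moreover have "v \<otimes> inv (u v) \<noteq> \<one>" using ne1 vc uvc
        by (metis inv_equality inv_inv inv_closed)
      ultimately show ?thesis using uvC ne1 vc uvc unfolding subgroup_sum_adj_def
        by (metis DiffI inv_closed singletonD)
    next
      case False
      hence "u v \<otimes> v \<in> H" using r unfolding rel_def by simp
      hence "v \<otimes> u v \<in> H" using comm_mem uvc vc by blast
      moreover have "v \<otimes> u v \<noteq> \<one>" using ne1 vc uvc
        by (metis inv_equality)
      ultimately show ?thesis using uvC ne1 vc uvc unfolding subgroup_sum_adj_def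
        by (metis DiffI singletonD)
    qed
    have nb: "c = u v \<or> c = inv (u v)" if "c \<in> C" "subgroup_sum_adj G H v c" for c
    proof -
      have cc: "c \<in> carrier G" and vcH: "v \<otimes> c \<in> H" using that unfolding subgroup_sum_adj_def by auto
      have "c \<otimes> v \<in> H" using comm_mem[OF vc cc vcH] .
      hence "rel c v" unfolding rel_def by simp
      thus ?thesis using key that(1) vc by blast
    qed
    have uq: "c = d" if c: "c \<in> C" "subgroup_sum_adj G H v c" and d: "d \<in> C" "subgroup_sum_adj G H v d" for c d
    proof (rule ccontr)
      assume cd: "c \<noteq> d"
      have "v \<otimes> u v \<in> H \<and> v \<otimes> inv (u v) \<in> H \<and> u v \<noteq> inv (u v)"
        using nb[OF c] nb[OF d] cd c(2) d(2) unfolding subgroup_sum_adj_def by auto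
      hence h1: "v \<otimes> u v \<in> H" and h2: "v \<otimes> inv (u v) \<in> H" and ne: "u v \<noteq> inv (u v)" by auto
      have "inv (v \<otimes> inv (u v)) \<in> H" using h2 by simp
      hence "u v \<otimes> inv v \<in> H" using vc uvc by (simp add: inv_mult_group)
      hence "(u v \<otimes> inv v) \<otimes> (v \<otimes> u v) \<in> H" using h1 by simp
      hence "u v \<otimes> u v \<in> H" using prod_eq[OF uvc inv_closed[OF vc] uvc] vc by simp
      hence "u v \<otimes> u v = \<one>" using uS(2)[OF vc] unfolding PP_def by simp
      hence "inv (u v) = u v" using uvc by (simp add: inv_equality)
      thus False using ne by simp
    qed
    show ?thesis using ex uq by blast
  qed
  have "perfect_code (carrier G) (subgroup_sum_adj G H) C"
    unfolding perfect_code_def using Csub indep cover by blast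
  thus ?thesis by blast
qed

end

theorem corollary3p2:
  fixes G :: "('a, 'b) monoid_scheme" and H :: "'a set"
  assumes "group G"
    and "finite (carrier G)"
    and "H \<lhd> G"
    and "odd (card H)"
  shows "\<exists>C. perfect_code (carrier G) (subgroup_sum_adj G H) C"
  using normal.main_pc[OF assms(3) assms(2) assms(4)] .

end
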